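(* Let $n\ge 2$ and let $A$ be an associative (not necessarily unital) algebra over a field which is generalized commutative of degree $n$, i.e. $A$ satisfies the identity $x_1x_2\cdots x_n=x_nx_{n-1}\cdots x_1$. If $n\not\equiv 1 \pmod 4$, then $A$ is eventually commutative of degree $n+1$; otherwise (if $n\equiv 1\pmod 4$), $A$ is eventually commutative of degree $n+2$.
   Context: An algebra $A$ satisfies an identity $x_1\cdots x_m=x_{\tau(1)}\cdots x_{\tau(m)}$ (with $\tau\in S_m$) if $a_1\cdots a_m=a_{\tau(1)}\cdots a_{\tau(m)}$ for all $a_1,\dots,a_m\in A$. $A$ is eventually commutative of degree $k$ if it satisfies $x_1\cdots x_k=x_{\tau(1)}\cdots x_{\tau(k)}$ for every $\tau\in S_k$. *)

theory Defs
  imports "HOL.Vector_Spaces" "HOL-Combinatorics.Permutations"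
begin

fun nprod :: "'a::semigroup_mult list \<Rightarrow> 'a" where
  "nprod [] = undefined"
| "nprod [x] = x"
| "nprod (x # y # xs) = x * nprod (y # xs)"

definition satisfies_identity :: "'a::semigroup_mult itself \<Rightarrow> nat \<Rightarrow> (nat \<Rightarrow> nat) \<Rightarrow> bool" where
  "satisfies_identity _ m \<tau> \<longleftrightarrow>
     (\<forall>a :: nat \<Rightarrow> 'a. nprod (map a [0..<m]) = nprod (map (\<lambda>i. a (\<tau> i)) [0..<m]))"

definition eventually_commutative :: "'a::semigroup_mult itself \<Rightarrow> nat \<Rightarrow> bool" where
  "eventually_commutative T k \<longleftrightarrow> (\<forall>\<tau>. \<tau> permutes {0..<k} \<longrightarrow> satisfies_identity T k \<tau>)"

definition generalized_commutative :: "'a::semigroup_mult itself \<Rightarrow> nat \<Rightarrow> bool" where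
  "generalized_commutative T n \<longleftrightarrow> satisfies_identity T n (\<lambda>i. if i < n then n - 1 - i else i)"

definition is_algebra :: "('k::field \<Rightarrow> 'a::ring \<Rightarrow> 'a) \<Rightarrow> bool" where
  "is_algebra scale \<longleftrightarrow> vector_space scale \<and>
     (\<forall>c x y. scale c (x * y) = scale c x * y \<and> scale c (x * y) = x * scale c y)"

end

theory Submission
  imports Defs
begin

lemma nprod_Cons: "L \<noteq> [] \<Longrightarrow> nprod (c # L) = c * nprod L"
  by (cases L) auto

lemma nprod_append: "xs \<noteq> [] \<Longrightarrow> ys \<noteq> [] \<Longrightarrow> nprod (xs @ ys) = nprod xs * nprod ys"
proof (induction xs rule: nprod.induct)
  case 1 then show ?case by simp
next
  case (2 x) then show ?case by (simp add: nprod_Cons)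
next
  case (3 x y xs) then show ?case by (simp add: nprod_Cons mult.assoc)
qed

lemma nprod_merge: "nprod (u @ [x, y] @ w) = nprod (u @ [x * y] @ w)"
proof (induction u)
  case Nil
  then show ?case by (cases w) (simp_all add: mult.assoc)
next
  case (Cons c u)
  then show ?case by (simp add: nprod_Cons)
qed

lemma len2: "2 \<le> length xs \<Longrightarrow> \<exists>a b ys. xs = a # b # ys"
  apply (cases xs)
   apply simp
  apply (rename_tac a t)
  apply (case_tac t)
   apply auto
  done

lemma len2r: "2 \<le> length xs \<Longrightarrow> \<exists>ys a b. xs = ys @ [a, b]"
proof -
  assume "2 \<le> length xs"
  then obtain a b ys where "rev xs = a # b # ys" using len2[of "rev xs"] by auto
  then have "xs = rev ys @ [b, a]" by (metis append.simps(1) append.simps(2) rev.simps(2) rev_rev_ident rev_append rev.simps(1))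
  then show ?thesis by blast
qed

lemma gc_rev:
  assumes "generalized_commutative TYPE('a::semigroup_mult) n" "length xs = n"
  shows "nprod (xs::'a list) = nprod (rev xs)"
proof -
  have "nprod (map (nth xs) [0..<n]) = nprod (map (\<lambda>i. nth xs (if i < n then n - 1 - i else i)) [0..<n])"
    using assms(1) unfolding generalized_commutative_def satisfies_identity_def by (rule spec)
  moreover have "map (nth xs) [0..<n] = xs" using assms(2) map_nth by metis
  moreover have "map (\<lambda>i. nth xs (if i < n then n - 1 - i else i)) [0..<n] = rev xs"
    using assms(2) by (intro nth_equalityI) (auto simp: rev_nth)
  ultimately show ?thesis by simp
qed

lemma gc_block:
  assumes G: "generalized_commutative TYPE('a::semigroup_mult) n" and l: "length u + length v + 1 = n"
  shows "nprod (u @ [a, b] @ v) = nprod (rev v @ [a, b] @ rev (u::'a list))"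
proof -
  have "nprod (u @ [a, b] @ v) = nprod (u @ [a * b] @ v)" by (rule nprod_merge)
  also have "... = nprod (rev (u @ [a * b] @ v))" using l by (intro gc_rev[OF G]) simp
  also have "... = nprod (rev v @ [a * b] @ rev u)" by simp
  also have "... = nprod (rev v @ [a, b] @ rev u)" by (rule nprod_merge[symmetric])
  finally show ?thesis .
qed

lemma gc_two:
  assumes G: "generalized_commutative TYPE('a::semigroup_mult) n" and l: "length t + 2 = n"
  shows "nprod ([a, b, c, d] @ t) = nprod (rev t @ [c, d, a, b::'a])"
proof -
  have "nprod ([a, b, c, d] @ t) = nprod ([] @ [a, b] @ ([c, d] @ t))" by simp
  also have "... = nprod ([a * b] @ [c, d] @ t)" using nprod_merge[of "[]" a b "[c, d] @ t"] by simp
  also have "... = nprod ([a * b, c * d] @ t)" using nprod_merge[of "[a*b]" c d t] by simp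
  also have "... = nprod (rev ([a * b, c * d] @ t))" using l by (intro gc_rev[OF G]) simp
  also have "... = nprod ((rev t @ [c * d]) @ [a * b] @ [])" by simp
  also have "... = nprod ((rev t @ [c * d]) @ [a, b] @ [])" by (rule nprod_merge[symmetric])
  also have "... = nprod (rev t @ [c * d] @ [a, b])" by simp
  also have "... = nprod (rev t @ [c, d] @ [a, b])" by (rule nprod_merge[symmetric])
  finally show ?thesis by simp
qed

definition T3 :: "'a::semigroup_mult itself \<Rightarrow> nat \<Rightarrow> bool" where
  "T3 T m \<longleftrightarrow> (\<forall>u v (x::'a) y z. length u + length v + 3 = m \<longrightarrow>
      nprod (u @ [x, y, z] @ v) = nprod (u @ [y, z, x] @ v))"

lemma T3D: "T3 TYPE('a::semigroup_mult) m \<Longrightarrow> length u + length v + 3 = m \<Longrightarrow>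
   nprod (u @ [x, y, z] @ v) = nprod (u @ [y, z, x] @ (v::'a list))"
  unfolding T3_def by blast

lemma T3I: "T3 TYPE('a::semigroup_mult) m \<Longrightarrow> length u + length v + 3 = m \<Longrightarrow>
   nprod (u @ [x, y, z] @ v) = nprod (u @ [z, x, y] @ (v::'a list))"
  using T3D[of m u v z x y] by simp

lemma t3_base:
  assumes G: "generalized_commutative TYPE('a::semigroup_mult) n"
  shows "T3 TYPE('a) (n + 1)"
  unfolding T3_def
proof (intro allI impI)
  fix u v :: "'a list" and x y z :: 'a
  assume l: "length u + length v + 3 = n + 1"
  have "nprod (u @ [y, z, x] @ v) = nprod ((u @ [y]) @ [z, x] @ v)" by simp
  also have "... = nprod (rev v @ [z, x] @ rev (u @ [y]))" using l by (intro gc_block[OF G]) simp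
  also have "... = nprod ((rev v @ [z]) @ [x, y] @ rev u)" by simp
  also have "... = nprod (rev (rev u) @ [x, y] @ rev (rev v @ [z]))" using l by (intro gc_block[OF G]) simp
  also have "... = nprod (u @ [x, y, z] @ v)" by simp
  finally show "nprod (u @ [x, y, z] @ v) = nprod (u @ [y, z, x] @ v)" by simp
qed

lemma t3_lift:
  assumes T: "T3 TYPE('a::semigroup_mult) m" and m: "5 \<le> m"
  shows "T3 TYPE('a) (m + 1)"
  unfolding T3_def
proof (intro allI impI)
  fix u v :: "'a list" and x y z :: 'a
  assume l: "length u + length v + 3 = m + 1"
  show "nprod (u @ [x, y, z] @ v) = nprod (u @ [y, z, x] @ v)"
  proof (cases "2 \<le> length v")
    case True
    then obtain v1 v2 v' where v: "v = v1 # v2 # v'" using len2 by blast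
    have "nprod (u @ [x, y, z] @ v) = nprod ((u @ [x, y, z]) @ [v1, v2] @ v')" by (simp add: v)
    also have "... = nprod ((u @ [x, y, z]) @ [v1 * v2] @ v')" by (rule nprod_merge)
    also have "... = nprod (u @ [x, y, z] @ ((v1 * v2) # v'))" by simp
    also have "... = nprod (u @ [y, z, x] @ ((v1 * v2) # v'))" using l v by (intro T3D[OF T]) simp
    also have "... = nprod ((u @ [y, z, x]) @ [v1 * v2] @ v')" by simp
    also have "... = nprod ((u @ [y, z, x]) @ [v1, v2] @ v')" by (rule nprod_merge[symmetric])
    finally show ?thesis by (simp add: v)
  next
    case False
    then have "2 \<le> length u" using l m by simp
    then obtain u' u1 u2 where u: "u = u' @ [u1, u2]" using len2r by blast
    have "nprod (u @ [x, y, z] @ v) = nprod (u' @ [u1, u2] @ ([x, y, z] @ v))" by (simp add: u)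
    also have "... = nprod (u' @ [u1 * u2] @ ([x, y, z] @ v))" by (rule nprod_merge)
    also have "... = nprod ((u' @ [u1 * u2]) @ [x, y, z] @ v)" by simp
    also have "... = nprod ((u' @ [u1 * u2]) @ [y, z, x] @ v)" using l u by (intro T3D[OF T]) simp
    also have "... = nprod (u' @ [u1 * u2] @ ([y, z, x] @ v))" by simp
    also have "... = nprod (u' @ [u1, u2] @ ([y, z, x] @ v))" by (rule nprod_merge[symmetric])
    finally show ?thesis by (simp add: u)
  qed
qed

lemma jump:
  assumes T: "T3 TYPE('a::semigroup_mult) m"
  shows "length s = 2 * k \<Longrightarrow> length u + length s + length v + 1 = m \<Longrightarrow>
         nprod (u @ [x] @ s @ v) = nprod (u @ s @ [x] @ (v::'a list))"
proof (induction k arbitrary: s u)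
  case 0 then show ?case by simp
next
  case (Suc k)
  then have "2 \<le> length s" by simp
  then obtain y z s' where s: "s = y # z # s'" using len2 by blast
  have ls': "length s' = 2 * k" using Suc.prems(1) s by simp
  have "nprod (u @ [x] @ s @ v) = nprod (u @ [x, y, z] @ (s' @ v))" by (simp add: s)
  also have "... = nprod (u @ [y, z, x] @ (s' @ v))" using Suc.prems by (intro T3D[OF T]) (simp add: s)
  also have "... = nprod ((u @ [y, z]) @ [x] @ s' @ v)" by simp
  also have "... = nprod ((u @ [y, z]) @ s' @ [x] @ v)" using Suc.prems ls' by (intro Suc.IH) (simp_all add: s)
  also have "... = nprod (u @ s @ [x] @ v)" by (simp add: s)
  finally show ?case .
qed

lemma jump_even:
  assumes T: "T3 TYPE('a::semigroup_mult) m" and "even (length s)"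
    and "length u + length s + length v + 1 = m"
  shows "nprod (u @ [x] @ s @ v) = nprod (u @ s @ [x] @ (v::'a list))"
proof -
  obtain k where "length s = 2 * k" using assms(2) by (auto elim!: evenE)
  then show ?thesis using jump[OF T] assms(3) by blast
qed

lemma pair_move:
  assumes T: "T3 TYPE('a::semigroup_mult) m" and o: "odd (length t)"
    and l: "length u + length t + length v + 2 = m"
  shows "nprod (u @ [x, y] @ t @ v) = nprod (u @ t @ [x, y] @ (v::'a list))"
proof -
  have "nprod (u @ [x, y] @ t @ v) = nprod (u @ [x] @ (y # t) @ v)" by simp
  also have "... = nprod (u @ (y # t) @ [x] @ v)" using o l by (intro jump_even[OF T]) simp_all
  also have "... = nprod (u @ [y] @ (t @ [x]) @ v)" by simp
  also have "... = nprod (u @ (t @ [x]) @ [y] @ v)" using o l by (intro jump_even[OF T]) simp_all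
  also have "... = nprod (u @ t @ [x, y] @ v)" by simp
  finally show ?thesis .
qed

lemma rev_red:
  assumes T: "T3 TYPE('a::semigroup_mult) m"
  shows "length u + length s + length v = m \<Longrightarrow>
    (length s mod 4 \<in> {0,1} \<longrightarrow> nprod (u @ rev s @ v) = nprod (u @ s @ (v::'a list))) \<and>
    (length s mod 4 \<in> {2,3} \<longrightarrow> nprod (u @ rev s @ v) = nprod (u @ [s!1, s!0] @ drop 2 s @ v))"
proof (induction s arbitrary: u v rule: rev_induct)
  case Nil then show ?case by simp
next
  case (snoc a s)
  define l where "l = length s"
  have IH: "(l mod 4 \<in> {0,1} \<longrightarrow> nprod ((u@[a]) @ rev s @ v) = nprod ((u@[a]) @ s @ v)) \<and>
    (l mod 4 \<in> {2,3} \<longrightarrow> nprod ((u@[a]) @ rev s @ v) = nprod ((u@[a]) @ [s!1, s!0] @ drop 2 s @ v))"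
    using snoc.IH[of "u @ [a]" v] snoc.prems l_def by simp
  have L: "nprod (u @ rev (s @ [a]) @ v) = nprod ((u@[a]) @ rev s @ v)" by simp
  have len: "length u + length s + length v + 1 = m" using snoc.prems by simp
  consider "l mod 4 = 0" | "l mod 4 = 1" | "l mod 4 = 2" | "l mod 4 = 3" by linarith
  then show ?case
  proof cases
    case 1
    then have e: "even l" by presburger
    have "nprod (u @ rev (s @ [a]) @ v) = nprod (u @ [a] @ s @ v)" using L IH 1 by simp
    also have "... = nprod (u @ s @ [a] @ v)" using e len l_def by (intro jump_even[OF T]) simp_all
    moreover have "length (s @ [a]) mod 4 = 1" using 1 l_def by simp presburger
    ultimately show ?thesis by simp
  next
    case 2
    show ?thesis
    proof (cases "l = 1")
      case True
      then obtain s0 where s: "s = [s0]" using l_def by (metis One_nat_def length_0_conv length_Suc_conv)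
      show ?thesis using s by simp
    next
      case False
      then have "2 \<le> length s" using 2 l_def by simp
      then obtain s0 s1 s' where s: "s = s0 # s1 # s'" using len2 by blast
      have e: "even (length (s0 # s'))" using 2 l_def s by simp presburger
      have "nprod (u @ rev (s @ [a]) @ v) = nprod (u @ [a] @ s @ v)" using L IH 2 by simp
      also have "... = nprod (u @ [a, s0, s1] @ (s' @ v))" by (simp add: s)
      also have "... = nprod (u @ [s1, a, s0] @ (s' @ v))" using len s by (intro T3I[OF T]) simp
      also have "... = nprod ((u @ [s1]) @ [a] @ (s0 # s') @ v)" by simp
      also have "... = nprod ((u @ [s1]) @ (s0 # s') @ [a] @ v)" using e len s by (intro jump_even[OF T]) simp_all
      moreover have "length (s @ [a]) mod 4 = 2" using 2 l_def by simp presburger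
      ultimately show ?thesis using s by simp
    qed
  next
    case 3
    then have ge: "2 \<le> length s" using l_def by simp
    then obtain s0 s1 s' where s: "s = s0 # s1 # s'" using len2 by blast
    have e: "even (length ([s1, s0] @ s'))" using 3 l_def s by simp presburger
    have "nprod (u @ rev (s @ [a]) @ v) = nprod (u @ [a] @ ([s1, s0] @ s') @ v)" using L IH 3 s by simp
    also have "... = nprod (u @ ([s1, s0] @ s') @ [a] @ v)" using e len s by (intro jump_even[OF T]) simp_all
    moreover have "length (s @ [a]) mod 4 = 3" using 3 l_def by simp presburger
    ultimately show ?thesis using s by simp
  next
    case 4
    then have ge: "2 \<le> length s" using l_def by simp
    then obtain s0 s1 s' where s: "s = s0 # s1 # s'" using len2 by blast
    have e: "even (length (s1 # s'))" using 4 l_def s by simp presburger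
    have "nprod (u @ rev (s @ [a]) @ v) = nprod (u @ [a, s1, s0] @ (s' @ v))" using L IH 4 s by simp
    also have "... = nprod (u @ [s0, a, s1] @ (s' @ v))" using len s by (intro T3I[OF T]) simp
    also have "... = nprod ((u @ [s0]) @ [a] @ (s1 # s') @ v)" by simp
    also have "... = nprod ((u @ [s0]) @ (s1 # s') @ [a] @ v)" using e len s by (intro jump_even[OF T]) simp_all
    moreover have "length (s @ [a]) mod 4 = 0" using 4 l_def by simp presburger
    ultimately show ?thesis using s by simp
  qed
qed

definition SW :: "'a::semigroup_mult itself \<Rightarrow> nat \<Rightarrow> nat \<Rightarrow> bool" where
  "SW T m i \<longleftrightarrow> (\<forall>u v (x::'a) y. length u = i \<longrightarrow> length u + length v + 2 = m \<longrightarrow>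
      nprod (u @ [x, y] @ v) = nprod (u @ [y, x] @ v))"

lemma SWD: "SW TYPE('a::semigroup_mult) m i \<Longrightarrow> length u = i \<Longrightarrow> length u + length v + 2 = m \<Longrightarrow>
   nprod (u @ [x, y] @ v) = nprod (u @ [y, x] @ (v::'a list))"
  unfolding SW_def by blast

lemma sw_step:
  assumes T: "T3 TYPE('a::semigroup_mult) m" and S: "SW TYPE('a) m i"
  shows "SW TYPE('a) m (Suc i)"
  unfolding SW_def
proof (intro allI impI)
  fix u v :: "'a list" and x y :: 'a
  assume lu: "length u = Suc i" and l: "length u + length v + 2 = m"
  then obtain u' c where u: "u = u' @ [c]" by (metis length_Suc_conv_rev)
  have "nprod (u @ [x, y] @ v) = nprod (u' @ [c, x, y] @ v)" by (simp add: u)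
  also have "... = nprod (u' @ [x, y, c] @ v)" using l u by (intro T3D[OF T]) simp
  also have "... = nprod (u' @ [x, y] @ (c # v))" by simp
  also have "... = nprod (u' @ [y, x] @ (c # v))" using lu l u by (intro SWD[OF S]) simp_all
  also have "... = nprod (u' @ [y, x, c] @ v)" by simp
  also have "... = nprod (u' @ [c, y, x] @ v)" using l u by (intro T3I[OF T]) simp
  finally show "nprod (u @ [x, y] @ v) = nprod (u @ [y, x] @ v)" by (simp add: u)
qed

lemma sw_all:
  assumes T: "T3 TYPE('a::semigroup_mult) m" and S: "SW TYPE('a) m 0"
  shows "SW TYPE('a) m i"
  by (induction i) (use S sw_step[OF T] in auto)

lemma move_front:
  assumes S: "\<And>i. SW TYPE('a::semigroup_mult) m i"
  shows "length u + length p + length w + 1 = m \<Longrightarrow> nprod (u @ p @ [x] @ w) = nprod (u @ [x] @ p @ (w::'a list))"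
proof (induction p arbitrary: w rule: rev_induct)
  case Nil then show ?case by simp
next
  case (snoc q p)
  have "nprod (u @ (p @ [q]) @ [x] @ w) = nprod ((u @ p) @ [q, x] @ w)" by simp
  also have "... = nprod ((u @ p) @ [x, q] @ w)" using snoc.prems by (intro SWD[OF S]) simp_all
  also have "... = nprod (u @ p @ [x] @ (q # w))" by simp
  also have "... = nprod (u @ [x] @ p @ (q # w))" using snoc.prems by (intro snoc.IH) simp
  finally show ?case by simp
qed

lemma perm_eq:
  assumes S: "\<And>i. SW TYPE('a::semigroup_mult) m i"
  shows "mset xs = mset ys \<Longrightarrow> length u + length xs = m \<Longrightarrow> nprod (u @ xs) = nprod (u @ (ys::'a list))"
proof (induction xs arbitrary: u ys)
  case Nil then show ?case by simp
next
  case (Cons x xs)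
  have "x \<in> set ys" using Cons.prems(1) by (metis list.set_intros(1) set_mset_mset)
  then obtain ys1 ys2 where ys: "ys = ys1 @ x # ys2" by (meson split_list)
  have ms: "mset xs = mset (ys1 @ ys2)" using Cons.prems(1) ys by simp
  have ln: "length xs = length ys1 + length ys2" using mset_eq_length[OF ms] by simp
  have "nprod (u @ x # xs) = nprod ((u @ [x]) @ xs)" by simp
  also have "... = nprod ((u @ [x]) @ ys1 @ ys2)" using Cons.prems ms by (intro Cons.IH) simp_all
  also have "... = nprod (u @ [x] @ ys1 @ ys2)" by simp
  also have "... = nprod (u @ ys1 @ [x] @ ys2)" using Cons.prems ln by (intro move_front[OF S, symmetric]) simp
  finally show ?case by (simp add: ys)
qed

lemma ec_from_sw:
  assumes S: "\<And>i. SW TYPE('a::semigroup_mult) m i"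
  shows "eventually_commutative TYPE('a) m"
  unfolding eventually_commutative_def satisfies_identity_def
proof (intro allI impI)
  fix \<tau> :: "nat \<Rightarrow> nat" and a :: "nat \<Rightarrow> 'a"
  assume p: "\<tau> permutes {0..<m}"
  have i: "image_mset \<tau> (mset_set {0..<m}) = mset_set {0..<m}"
    using image_mset_mset_set[of \<tau> "{0..<m}"] permutes_inj_on[OF p] permutes_image[OF p] by simp
  have "mset (map (\<lambda>i. a (\<tau> i)) [0..<m]) = image_mset a (image_mset \<tau> (mset [0..<m]))"
    by (simp add: multiset.map_comp o_def)
  also have "... = mset (map a [0..<m])" by (simp add: mset_upt i)
  finally have "mset (map a [0..<m]) = mset (map (\<lambda>i. a (\<tau> i)) [0..<m])" by simp
  then show "nprod (map a [0..<m]) = nprod (map (\<lambda>i. a (\<tau> i)) [0..<m])"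
    using perm_eq[OF S, of "map a [0..<m]" _ "[]"] by simp
qed

lemma sw0_a:
  assumes G: "generalized_commutative TYPE('a::semigroup_mult) n" and n: "2 \<le> n"
    and md: "n mod 4 = 2 \<or> n mod 4 = 3"
  shows "SW TYPE('a) (n + 1) 0"
  unfolding SW_def
proof (intro allI impI)
  fix u v :: "'a list" and x y :: 'a
  assume lu: "length u = 0" and l: "length u + length v + 2 = n + 1"
  then have u: "u = []" by simp
  have "v \<noteq> []" using l n lu by auto
  then obtain v' z where v: "v = v' @ [z]" by (metis rev_exhaust)
  define s where "s = [x, y] @ v'"
  have ls: "length s = n" using l u v s_def by simp
  have T: "T3 TYPE('a) (n + 1)" by (rule t3_base[OF G])
  have "nprod (u @ [x, y] @ v) = nprod s * z" using nprod_append[of s "[z]"] by (simp add: u v s_def)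
  also have "... = nprod (rev s) * z" using gc_rev[OF G ls] by simp
  also have "... = nprod ([] @ rev s @ [z])" using nprod_append[of "rev s" "[z]"] by (simp add: s_def)
  also have "... = nprod ([] @ [s!1, s!0] @ drop 2 s @ [z])"
    using conjunct2[OF rev_red[OF T, of "[]" s "[z]"]] ls md by simp
  finally show "nprod (u @ [x, y] @ v) = nprod (u @ [y, x] @ v)" by (simp add: u v s_def)
qed

lemma sw0_b:
  assumes G: "generalized_commutative TYPE('a::semigroup_mult) n" and n: "2 \<le> n"
    and md: "n mod 4 = 0"
  shows "SW TYPE('a) (n + 1) 0"
  unfolding SW_def
proof (intro allI impI)
  fix u v :: "'a list" and x y :: 'a
  assume lu: "length u = 0" and l: "length u + length v + 2 = n + 1"
  then have u: "u = []" by simp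
  have "n \<ge> 4" using n md by presburger
  then have "2 \<le> length v" using l lu by simp
  then obtain w' c d where v: "v = w' @ [c, d]" using len2r by blast
  define t where "t = [x, y] @ w'"
  have lt: "length t + 1 = n" using l u v t_def by simp
  have lt3: "length t mod 4 = 3" using lt md by presburger
  then have ot: "odd (length t)" by presburger
  have T: "T3 TYPE('a) (n + 1)" by (rule t3_base[OF G])
  have "nprod (u @ [x, y] @ v) = nprod ([] @ t @ [c, d] @ [])" by (simp add: u v t_def)
  also have "... = nprod ([] @ [c, d] @ t @ [])" using lt ot by (intro pair_move[OF T, symmetric]) simp_all
  also have "... = nprod ([] @ [c, d] @ t)" by simp
  also have "... = nprod (rev t @ [c, d] @ rev [])" using lt by (intro gc_block[OF G]) simp
  also have "... = nprod ([] @ rev t @ [c, d])" by simp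
  also have "... = nprod ([] @ [t!1, t!0] @ drop 2 t @ [c, d])"
    using conjunct2[OF rev_red[OF T, of "[]" t "[c, d]"]] lt lt3 by simp
  finally show "nprod (u @ [x, y] @ v) = nprod (u @ [y, x] @ v)" by (simp add: u v t_def)
qed

lemma sw0_c:
  assumes G: "generalized_commutative TYPE('a::semigroup_mult) n" and n: "2 \<le> n"
    and md: "n mod 4 = 1"
  shows "SW TYPE('a) (n + 2) 0"
  unfolding SW_def
proof (intro allI impI)
  fix u v :: "'a list" and x y :: 'a
  assume lu: "length u = 0" and l: "length u + length v + 2 = n + 2"
  then have u: "u = []" by simp
  have n5: "n \<ge> 5" using n md by presburger
  then have "2 \<le> length v" using l lu by simp
  then obtain w1 c d where v1: "v = w1 @ [c, d]" using len2r by blast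
  have "2 \<le> length w1" using l n5 v1 lu by simp
  then obtain w' a b where w1: "w1 = w' @ [a, b]" using len2r by blast
  define t where "t = [x, y] @ w'"
  have lt: "length t + 2 = n" using l u v1 w1 t_def by simp
  have lt3: "length t mod 4 = 3" using lt md by presburger
  then have ot: "odd (length t)" by presburger
  have T: "T3 TYPE('a) (n + 2)" using t3_lift[OF t3_base[OF G], of] n5 by simp
  have "nprod (u @ [x, y] @ v) = nprod ([] @ t @ [a, b] @ [c, d])" by (simp add: u v1 w1 t_def)
  also have "... = nprod ([] @ [a, b] @ t @ [c, d])" using lt ot by (intro pair_move[OF T, symmetric]) simp_all
  also have "... = nprod ([a, b] @ t @ [c, d] @ [])" by simp
  also have "... = nprod ([a, b] @ [c, d] @ t @ [])" using lt ot by (intro pair_move[OF T, symmetric]) simp_all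
  also have "... = nprod ([a, b, c, d] @ t)" by simp
  also have "... = nprod (rev t @ [c, d, a, b])" using lt by (intro gc_two[OF G])
  also have "... = nprod ((rev t @ [c]) @ [d, a, b] @ [])" by simp
  also have "... = nprod ((rev t @ [c]) @ [a, b, d] @ [])" using lt by (intro T3D[OF T]) simp
  also have "... = nprod (rev t @ [c, a, b] @ [d])" by simp
  also have "... = nprod (rev t @ [a, b, c] @ [d])" using lt by (intro T3D[OF T]) simp
  also have "... = nprod ([] @ rev t @ [a, b, c, d])" by simp
  also have "... = nprod ([] @ [t!1, t!0] @ drop 2 t @ [a, b, c, d])"
    using conjunct2[OF rev_red[OF T, of "[]" t "[a, b, c, d]"]] lt lt3 by simp
  finally show "nprod (u @ [x, y] @ v) = nprod (u @ [y, x] @ v)" by (simp add: u v1 w1 t_def)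
qed

theorem theorem3p4:
  fixes scale :: "'k::field \<Rightarrow> 'a::ring \<Rightarrow> 'a"
    and n :: nat
  assumes "is_algebra scale"
    and "n \<ge> 2"
    and "generalized_commutative TYPE('a) n"
  shows "(n mod 4 \<noteq> 1 \<longrightarrow> eventually_commutative TYPE('a) (n + 1)) \<and>
         (n mod 4 = 1 \<longrightarrow> eventually_commutative TYPE('a) (n + 2))"
proof (intro conjI impI)
  assume md: "n mod 4 \<noteq> 1"
  have T: "T3 TYPE('a) (n + 1)" by (rule t3_base[OF assms(3)])
  have S0: "SW TYPE('a) (n + 1) 0"
  proof (cases "n mod 4 = 0")
    case True
    then show ?thesis using sw0_b[OF assms(3) assms(2)] by simp
  next
    case False
    then have "n mod 4 = 2 \<or> n mod 4 = 3" using md by presburger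
    then show ?thesis using sw0_a[OF assms(3) assms(2)] by simp
  qed
  show "eventually_commutative TYPE('a) (n + 1)"
    by (rule ec_from_sw) (rule sw_all[OF T S0])
next
  assume md: "n mod 4 = 1"
  have n5: "n \<ge> 5" using assms(2) md by presburger
  have T: "T3 TYPE('a) (n + 2)" using t3_lift[OF t3_base[OF assms(3)]] n5 by simp
  have S0: "SW TYPE('a) (n + 2) 0" by (rule sw0_c[OF assms(3) assms(2) md])
  show "eventually_commutative TYPE('a) (n + 2)"
    by (rule ec_from_sw) (rule sw_all[OF T S0])
qed

end
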